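(* Let $m\le n$ and let $r_1,\dots,r_m$ be positive integers with $n=\sum_{i=1}^m r_i$. For a positive integer $r$, let $\mathbf{1}_r$ denote the column vector of length $r$ with all entries $1$. Let $A=(a_{ij})$ be an $m\times m$ real matrix, and let $M$ be an $n\times n$ real matrix whose rows are divided into consecutive blocks of sizes $r_1,\dots,r_m$, whose $j$-th column, for $1\le j\le m$, is the vector $(a_{1j}\mathbf{1}_{r_1}^\top, a_{2j}\mathbf{1}_{r_2}^\top,\dots,a_{mj}\mathbf{1}_{r_m}^\top)^\top$, and whose remaining $n-m$ columns are arbitrary. Let $N$ be the $n\times n$ matrix with the same last $n-m$ columns as $M$, and whose $j$-th column, for $1\le j\le m$, has $\mathbf{1}_{r_j}$ in the $j$-th row block and zeros in all other row blocks. Then $\det(M)=\det(A)\cdot\det(N)$. *)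

theory Defs
  imports "Jordan_Normal_Form.Determinant"
begin

end

theory Submission
  imports Defs
begin

lemma block_exists:
  fixes r :: "nat \<Rightarrow> nat"
  shows "k < (\<Sum>i<m. r i) \<Longrightarrow> \<exists>b<m. (\<Sum>i<b. r i) \<le> k \<and> k < (\<Sum>i<Suc b. r i)"
proof (induction m)
  case 0 then show ?case by simp
next
  case (Suc m)
  show ?case
  proof (cases "k < (\<Sum>i<m. r i)")
    case True then show ?thesis using Suc.IH by (meson less_SucI)
  next
    case False then show ?thesis using Suc.prems by (intro exI[of _ m]) auto
  qed
qed

theorem lemma4p5:
  fixes m n :: nat and r :: "nat \<Rightarrow> nat"
    and A M N :: "real mat"
  assumes "m \<le> n"
    and "\<And>i. i < m \<Longrightarrow> r i > 0"
    and "n = (\<Sum>i<m. r i)"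
    and "A \<in> carrier_mat m m"
    and "M \<in> carrier_mat n n"
    and "N \<in> carrier_mat n n"
    and "\<And>k j b. k < n \<Longrightarrow> j < m \<Longrightarrow> b < m \<Longrightarrow>
           (\<Sum>i<b. r i) \<le> k \<Longrightarrow> k < (\<Sum>i<Suc b. r i) \<Longrightarrow>
           M $$ (k, j) = A $$ (b, j)"
    and "\<And>k j b. k < n \<Longrightarrow> j < m \<Longrightarrow> b < m \<Longrightarrow>
           (\<Sum>i<b. r i) \<le> k \<Longrightarrow> k < (\<Sum>i<Suc b. r i) \<Longrightarrow>
           N $$ (k, j) = (if b = j then 1 else 0)"
    and "\<And>k j. k < n \<Longrightarrow> m \<le> j \<Longrightarrow> j < n \<Longrightarrow> N $$ (k, j) = M $$ (k, j)"
  shows "det M = det A * det N"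
proof -
  define B where "B = four_block_mat A (0\<^sub>m m (n-m)) (0\<^sub>m (n-m) m) (1\<^sub>m (n-m))"
  have Bc: "B \<in> carrier_mat n n" unfolding B_def using assms(1,4)
    by (metis four_block_carrier_mat le_add_diff_inverse one_carrier_mat zero_carrier_mat)
  have detB: "det B = det A" unfolding B_def
    by (subst det_four_block_mat_upper_right_zero[OF assms(4)]) auto
  have Bent: "B $$ (l, j) = (if l < m \<and> j < m then A $$ (l, j) else if l = j then 1 else 0)"
    if "l < n" "j < n" for l j
    using that assms(1,4) unfolding B_def by (subst index_mat_four_block) auto
  have MNB: "M = N * B"
  proof (rule eq_matI)
    fix k j assume k: "k < dim_row (N * B)" and j: "j < dim_col (N * B)"
    hence kn: "k < n" and jn: "j < n" using Bc assms(6) by auto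
    obtain b where b: "b < m" "(\<Sum>i<b. r i) \<le> k" "k < (\<Sum>i<Suc b. r i)"
      using block_exists[of k r m] kn assms(3) by auto
    have "(N * B) $$ (k, j) = (\<Sum>l\<in>{0..<n}. N $$ (k, l) * B $$ (l, j))"
      using kn jn Bc assms(6) by (simp add: scalar_prod_def)
    also have "\<dots> = M $$ (k, j)"
    proof (cases "j < m")
      case True
      have "(\<Sum>l\<in>{0..<n}. N $$ (k, l) * B $$ (l, j)) = (\<Sum>l\<in>{0..<n}. if l = b then A $$ (b, j) else 0)"
        using b kn jn True assms(8)[of k _ b] by (intro sum.cong) (auto simp: Bent)
      also have "\<dots> = A $$ (b, j)" using b assms(1) by simp
      finally show ?thesis using assms(7)[of k j b] b kn True by simp
    next
      case False
      have "(\<Sum>l\<in>{0..<n}. N $$ (k, l) * B $$ (l, j)) = (\<Sum>l\<in>{0..<n}. if l = j then N $$ (k, j) else 0)"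
        using kn jn False by (intro sum.cong) (auto simp: Bent)
      also have "\<dots> = N $$ (k, j)" using jn by simp
      finally show ?thesis using assms(9)[of k j] kn jn False by simp
    qed
    finally show "M $$ (k, j) = (N * B) $$ (k, j)" by simp
  next
    show "dim_row M = dim_row (N * B)" "dim_col M = dim_col (N * B)"
      using assms(5,6) Bc by auto
  qed
  show ?thesis using det_mult[OF assms(6) Bc] detB MNB by simp
qed

end
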